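(* Let $\sigma\in\Sigma$, $K=[-q\mathbf 1,q\mathbf 1]$ a compact cube, $\varepsilon>0$ and $0<t<\infty$. Then there is a deterministic compact cube $L\subseteq\mathbb R^d$ such that $$P^\sigma\{S_K(\sigma(s))\subseteq L\text{ for all }s\in[0,t]\}\ge1-\varepsilon.$$
   Context: Order: for $x,y\in\mathbb R^d$, $x\le y$ iff $x_i\le y_i$ for all $i$; $\mathbf 1=(1,\dots,1)$; $|x|_\infty=\max_i|x_i|$; $d\ge2$. $\mathbb Z^*=\mathbb Z\cup\{\pm\infty\}$. The state space $\Sigma$ is the set of functions $\sigma:\mathbb R^d\to\mathbb Z^*$ such that (i) $x\le y$ implies $\sigma(x)\le\sigma(y)$; (ii) for every cube $[-q\mathbf 1,q\mathbf 1]$ there are finite partitions $-q=s_i^0<\dots<s_i^{m_i}=q$ of each coordinate axis such that $\sigma$ is constant on each rectangle $\prod_i[s_i^{k_i},s_i^{k_i+1})$; (iii) for every $b\in\mathbb R^d$, $\lim_{M\to\infty}\sup\{|y|_\infty^{-d/(d+1)}\sigma(y):y\le b,|y|_\infty\ge M\}=-\infty$. Dynamics: a rate-one Poisson point process on $\mathbb R^d\times(0,\infty)$; $\mathbf H((y,0),(x,t))$ is the maximal number of Poisson points on a strictly increasing chain (coordinatewise order in $\mathbb R^{d+1}$) in $\{(\eta,s):y<\eta\le x,0<s\le t\}$; from $\sigma$, $\sigma(x,0)=\sigma(x)$, $\sigma(x,t)=\sup_{y\le x}\{\sigma(y)+\mathbf H((y,0),(x,t))\}$, $\sigma(s)=\sigma(\cdot,s)$,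 with law $P^\sigma$. For $\rho\in\Sigma$, $x\in\mathbb R^d$: $S_x(\rho)=\{y:y\le x,\ \rho(y)=\rho(x)\}$ if $\rho(x)$ finite, $S_x(\rho)=\emptyset$ if $\rho(x)=\pm\infty$; $S_K(\rho)=\bigcup_{x\in K}S_x(\rho)$. *)

theory Defs
  imports "HOL-Analysis.Analysis" "HOL-Probability.Probability"
begin

text \<open>Points of R^d are vectors of type real^'n, d = CARD('n).
  Values in Z* = Z \<union> {+-infinity} are represented in ereal.\<close>

definition linf :: "real^'n \<Rightarrow> real" where
  "linf y = Max (range (\<lambda>i. \<bar>y $ i\<bar>))"

definition is_zstar :: "ereal \<Rightarrow> bool" where
  "is_zstar v \<longleftrightarrow> v = \<infinity> \<or> v = -\<infinity> \<or> (\<exists>k::int. v = ereal (of_int k))"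

definition in_Sigma :: "(real^'n \<Rightarrow> ereal) \<Rightarrow> bool" where
  "in_Sigma \<sigma> \<longleftrightarrow>
     (\<forall>x. is_zstar (\<sigma> x)) \<and>
     (\<forall>x y. x \<le> y \<longrightarrow> \<sigma> x \<le> \<sigma> y) \<and>
     (\<forall>q::real. q > 0 \<longrightarrow>
        (\<exists>(s :: 'n \<Rightarrow> nat \<Rightarrow> real) (m :: 'n \<Rightarrow> nat).
           (\<forall>i. s i 0 = -q \<and> s i (m i) = q \<and> (\<forall>k < m i. s i k < s i (Suc k))) \<and>
           (\<forall>kk :: 'n \<Rightarrow> nat. (\<forall>i. kk i < m i) \<longrightarrow>
              (\<forall>x y. (\<forall>i. s i (kk i) \<le> x $ i \<and> x $ i < s i (Suc (kk i))) \<longrightarrow>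
                     (\<forall>i. s i (kk i) \<le> y $ i \<and> y $ i < s i (Suc (kk i))) \<longrightarrow>
                     \<sigma> x = \<sigma> y)))) \<and>
     (\<forall>b::real^'n.
        ((\<lambda>M::real. SUP y \<in> {y. y \<le> b \<and> linf y \<ge> M}.
              ereal (linf y powr (- real CARD('n) / (real CARD('n) + 1))) * \<sigma> y)
          \<longlongrightarrow> -\<infinity>) at_top)"

definition vlt :: "real^'n \<Rightarrow> real^'n \<Rightarrow> bool" where
  "vlt x y \<longleftrightarrow> (\<forall>i. x $ i < y $ i)"

definition st_less :: "((real^'n) \<times> real) \<Rightarrow> ((real^'n) \<times> real) \<Rightarrow> bool" where
  "st_less p p' \<longleftrightarrow> vlt (fst p) (fst p') \<and> snd p < snd p'"

text \<open>H((y,0),(x,t)) for a point configuration P: maximal number of points of P on a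
  strictly increasing chain in {(eta,s). y < eta \<le> x, 0 < s \<le> t}.\<close>
definition chainH :: "((real^'n) \<times> real) set \<Rightarrow> real^'n \<Rightarrow> real^'n \<Rightarrow> real \<Rightarrow> ereal" where
  "chainH P y x t =
     (SUP c \<in> {c. set c \<subseteq> P \<inter> {(\<eta>, s). vlt y \<eta> \<and> \<eta> \<le> x \<and> 0 < s \<and> s \<le> t}
                 \<and> sorted_wrt st_less c}. ereal (real (length c)))"

definition evolve :: "(real^'n \<Rightarrow> ereal) \<Rightarrow> ((real^'n) \<times> real) set \<Rightarrow> real \<Rightarrow> real^'n \<Rightarrow> ereal" where
  "evolve \<sigma> P t x = (if t = 0 then \<sigma> x else (SUP y \<in> {y. y \<le> x}. \<sigma> y + chainH P y x t))"

definition S_pt :: "(real^'n \<Rightarrow> ereal) \<Rightarrow> real^'n \<Rightarrow> (real^'n) set" where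
  "S_pt \<rho> x = (if \<rho> x = \<infinity> \<or> \<rho> x = -\<infinity> then {} else {y. y \<le> x \<and> \<rho> y = \<rho> x})"

definition S_set :: "(real^'n \<Rightarrow> ereal) \<Rightarrow> (real^'n) set \<Rightarrow> (real^'n) set" where
  "S_set \<rho> K = (\<Union>x\<in>K. S_pt \<rho> x)"

definition poisson_pp :: "'a measure \<Rightarrow> ('a \<Rightarrow> ((real^'n) \<times> real) set) \<Rightarrow> bool" where
  "poisson_pp M N \<longleftrightarrow> prob_space M \<and>
     (\<forall>\<omega>\<in>space M. N \<omega> \<subseteq> UNIV \<times> {0<..} \<and> (\<forall>B. bounded B \<longrightarrow> finite (N \<omega> \<inter> B))) \<and>
     (\<forall>B. B \<in> sets lborel \<and> bounded B \<and> B \<subseteq> UNIV \<times> {0<..} \<longrightarrow>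
        (\<lambda>\<omega>. card (N \<omega> \<inter> B)) \<in> measurable M (count_space UNIV) \<and>
        (\<forall>k. measure M {\<omega>\<in>space M. card (N \<omega> \<inter> B) = k}
               = exp (- measure lborel B) * measure lborel B ^ k / fact k)) \<and>
     (\<forall>(I :: nat set) Bs. finite I \<and> disjoint_family_on Bs I \<and>
        (\<forall>i\<in>I. Bs i \<in> sets lborel \<and> bounded (Bs i) \<and> Bs i \<subseteq> UNIV \<times> {0<..}) \<longrightarrow>
        prob_space.indep_vars M (\<lambda>_. count_space UNIV) (\<lambda>i \<omega>. card (N \<omega> \<inter> Bs i)) I)"

end

theory Submission
  imports Defs
begin

lemma poisson_tail_real:
  fixes \<mu> :: real assumes "\<mu> \<ge> 0"
  shows "1 - exp (-\<mu>) * (\<Sum>j<k. \<mu>^j / fact j) \<le> \<mu>^k / fact k"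
proof -
  obtain t where t: "\<bar>t\<bar> \<le> \<bar>\<mu>\<bar>" "exp \<mu> = (\<Sum>m<k. \<mu>^m / fact m) + exp t / fact k * \<mu>^k"
    using Maclaurin_exp_le[of \<mu> k] by blast
  have et: "exp t \<le> exp \<mu>" using t(1) assms by simp
  have "exp (-\<mu>) * (\<Sum>j<k. \<mu>^j / fact j) = exp (-\<mu>) * (exp \<mu> - exp t / fact k * \<mu>^k)"
    using t(2) by simp
  also have "\<dots> = 1 - exp (-\<mu>) * exp t * (\<mu>^k / fact k)"
    by (simp add: algebra_simps exp_minus_inverse)
  also have "\<dots> \<ge> 1 - \<mu>^k / fact k"
  proof -
    have "exp (-\<mu>) * exp t \<le> 1" using et by (simp add: exp_minus field_simps)
    moreover have "\<mu>^k / fact k \<ge> 0" using assms by simp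
    ultimately have "exp (-\<mu>) * exp t * (\<mu>^k / fact k) \<le> \<mu>^k / fact k"
      by (intro mult_left_le_one_le) auto
    then show ?thesis by linarith
  qed
  finally show ?thesis by linarith
qed

lemma pow_le_exp_fact: "real k ^ k \<le> exp (real k) * fact k"
proof -
  obtain t where t: "exp (real k) = (\<Sum>m<Suc k. real k^m / fact m) + exp t / fact (Suc k) * real k^(Suc k)"
    using Maclaurin_exp_le[of "real k" "Suc k"] by blast
  have "real k ^ k / fact k \<le> (\<Sum>m<Suc k. real k^m / fact m)"
    by (rule member_le_sum) auto
  also have "\<dots> \<le> exp (real k)" using t by (simp add: zero_le_mult_iff)
  finally show ?thesis by (simp add: divide_le_eq mult.commute)
qed

lemma fact_bound: assumes "\<mu> \<ge> 0" "k \<ge> 1"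
  shows "\<mu>^k / fact k \<le> (exp 1 * \<mu> / real k)^k"
proof -
  have kp: "real k ^ k > 0" using assms by simp
  have "\<mu>^k / fact k = \<mu>^k * real k^k / (real k ^ k * fact k)" using kp by simp
  also have "\<dots> \<le> \<mu>^k * (exp (real k) * fact k) / (real k ^ k * fact k)"
    using pow_le_exp_fact[of k] assms
    by (intro divide_right_mono mult_left_mono) auto
  also have "\<dots> = (exp 1 * \<mu> / real k)^k"
    by (simp add: power_divide power_mult_distrib exp_of_nat_mult[symmetric])
  finally show ?thesis .
qed


lemma poisson_card_tail:
  assumes pp: "poisson_pp M N" and B: "B \<in> sets lborel" "bounded B" "B \<subseteq> UNIV \<times> {0<..}"
    and mu: "measure lborel B \<le> \<mu>0"
  shows "{\<omega>\<in>space M. k \<le> card (N \<omega> \<inter> B)} \<in> sets M"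
    and "measure M {\<omega>\<in>space M. k \<le> card (N \<omega> \<inter> B)} \<le> \<mu>0^k / fact k"
proof -
  define X where "X \<omega> = card (N \<omega> \<inter> B)" for \<omega>
  have ps: "prob_space M" using pp unfolding poisson_pp_def by blast
  then interpret prob_space M .
  have meas: "X \<in> measurable M (count_space UNIV)"
    and dist: "\<And>j. measure M {\<omega>\<in>space M. X \<omega> = j} = exp (- measure lborel B) * measure lborel B ^ j / fact j"
    using pp B unfolding poisson_pp_def X_def by blast+
  have setsP: "{\<omega>\<in>space M. P (X \<omega>)} \<in> sets M" for P
  proof -
    have "X -` {n. P n} \<inter> space M \<in> sets M" by (rule measurable_sets[OF meas]) simp
    moreover have "X -` {n. P n} \<inter> space M = {\<omega>\<in>space M. P (X \<omega>)}" by auto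
    ultimately show ?thesis by simp
  qed
  have setsE: "{\<omega>\<in>space M. X \<omega> = j} \<in> sets M" for j using setsP[of "\<lambda>n. n = j"] by simp
  show "{\<omega>\<in>space M. k \<le> card (N \<omega> \<inter> B)} \<in> sets M" using setsP[of "\<lambda>n. k \<le> n"] unfolding X_def by simp
  let ?\<mu> = "measure lborel B"
  have eq: "{\<omega>\<in>space M. k \<le> X \<omega>} = space M - (\<Union>j\<in>{..<k}. {\<omega>\<in>space M. X \<omega> = j})"
    by auto
  have "measure M (\<Union>j\<in>{..<k}. {\<omega>\<in>space M. X \<omega> = j}) = (\<Sum>j<k. measure M {\<omega>\<in>space M. X \<omega> = j})"
    by (intro finite_measure_finite_Union) (auto simp: setsE disjoint_family_on_def)
  also have "\<dots> = exp (- ?\<mu>) * (\<Sum>j<k. ?\<mu>^j / fact j)"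
    by (simp add: dist sum_distrib_left)
  finally have U: "measure M (\<Union>j\<in>{..<k}. {\<omega>\<in>space M. X \<omega> = j}) = exp (- ?\<mu>) * (\<Sum>j<k. ?\<mu>^j / fact j)" .
  have "measure M {\<omega>\<in>space M. k \<le> X \<omega>} = 1 - exp (- ?\<mu>) * (\<Sum>j<k. ?\<mu>^j / fact j)"
    unfolding eq using U prob_space by (subst finite_measure_compl) (auto intro!: sets.finite_UN setsE)
  also have "\<dots> \<le> ?\<mu>^k / fact k" by (rule poisson_tail_real) simp
  also have "\<dots> \<le> \<mu>0^k / fact k"
    by (intro divide_right_mono power_mono mu) auto
  finally show "measure M {\<omega>\<in>space M. k \<le> card (N \<omega> \<inter> B)} \<le> \<mu>0^k / fact k"
    unfolding X_def .
qed

definition crd :: "real \<Rightarrow> ((real^'n) \<times> real) \<Rightarrow> 'n option \<Rightarrow> real" where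
  "crd a p d = (case d of Some i \<Rightarrow> fst p $ i - a | None \<Rightarrow> snd p)"
definition stp :: "real \<Rightarrow> real \<Rightarrow> 'n option \<Rightarrow> real" where
  "stp h \<tau> d = (case d of Some _ \<Rightarrow> h | None \<Rightarrow> \<tau>)"
definition cell :: "real \<Rightarrow> real \<Rightarrow> real \<Rightarrow> ('n option \<Rightarrow> nat) \<Rightarrow> ((real^'n) \<times> real) set" where
  "cell a h \<tau> k = {p. \<forall>d. real (k d) * stp h \<tau> d < crd a p d \<and> crd a p d \<le> (real (k d) + 1) * stp h \<tau> d}"

lemma cell_eq: "cell a h \<tau> k = {p. (\<forall>i. real (k (Some i)) * h < fst p $ i - a \<and> fst p $ i - a \<le> (real (k (Some i)) + 1) * h)
   \<and> real (k None) * \<tau> < snd p \<and> snd p \<le> (real (k None) + 1) * \<tau>}"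
  unfolding cell_def crd_def stp_def
  by (auto split: option.splits)

lemma cell_sets: "cell a h \<tau> (k :: 'n::finite option \<Rightarrow> nat) \<in> sets lborel"
proof -
  have e: "cell a h \<tau> k = (\<Inter>i. {p. real (k (Some i)) * h + a < fst p $ i} \<inter> {p. fst p $ i \<le> (real (k (Some i)) + 1) * h + a})
     \<inter> {p. real (k None) * \<tau> < snd p} \<inter> {p. snd p \<le> (real (k None) + 1) * \<tau>}"
    unfolding cell_eq by (auto simp: algebra_simps)
  have o1: "{p::(real^'n) \<times> real. c < fst p $ i} \<in> sets borel" for c i
    by (intro borel_open open_Collect_less continuous_intros)
  have c1: "{p::(real^'n) \<times> real. fst p $ i \<le> c} \<in> sets borel" for c i
    by (intro borel_closed closed_Collect_le continuous_intros)
  have o2: "{p::(real^'n) \<times> real. c < snd p} \<in> sets borel" for c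
    by (intro borel_open open_Collect_less continuous_intros)
  have c2: "{p::(real^'n) \<times> real. snd p \<le> c} \<in> sets borel" for c
    by (intro borel_closed closed_Collect_le continuous_intros)
  show ?thesis unfolding e sets_lborel
    by (intro sets.Int sets.finite_INT o1 c1 o2 c2) auto
qed

lemma cell_sub_cbox: "cell a h \<tau> k \<subseteq> cbox ((\<chi> i. a + real (k (Some i)) * h), real (k None) * \<tau>)
     ((\<chi> i. a + (real (k (Some i)) + 1) * h), (real (k None) + 1) * \<tau>)"
proof
  fix p assume "p \<in> cell a h \<tau> k"
  then have *: "\<And>i. real (k (Some i)) * h < fst p $ i - a \<and> fst p $ i - a \<le> (real (k (Some i)) + 1) * h"
    and **: "real (k None) * \<tau> < snd p" "snd p \<le> (real (k None) + 1) * \<tau>"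
    unfolding cell_eq by auto
  have "fst p \<in> cbox (\<chi> i. a + real (k (Some i)) * h) (\<chi> i. a + (real (k (Some i)) + 1) * h)"
    unfolding mem_box_cart vec_lambda_beta
  proof (intro allI conjI)
    fix i show "a + real (k (Some i)) * h \<le> fst p $ i" using *[of i] by linarith
    show "fst p $ i \<le> a + (real (k (Some i)) + 1) * h" using *[of i] by linarith
  qed
  moreover have "snd p \<in> cbox (real (k None) * \<tau>) ((real (k None) + 1) * \<tau>)"
    using ** by simp
  ultimately show "p \<in> cbox ((\<chi> i. a + real (k (Some i)) * h), real (k None) * \<tau>)
     ((\<chi> i. a + (real (k (Some i)) + 1) * h), (real (k None) + 1) * \<tau>)"
    unfolding cbox_Pair_eq by (cases p) auto
qed

lemma cell_bounded: "bounded (cell a h \<tau> k)"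
  by (rule bounded_subset[OF bounded_cbox cell_sub_cbox])

lemma cell_pos: assumes "\<tau> > 0" shows "cell a h \<tau> k \<subseteq> UNIV \<times> {0<..}"
proof
  fix p assume "p \<in> cell a h \<tau> k"
  then have "real (k None) * \<tau> < snd p" unfolding cell_eq by auto
  moreover have "0 \<le> real (k None) * \<tau>" using assms by simp
  ultimately show "p \<in> UNIV \<times> {0<..}" by (cases p) auto
qed

lemma cell_measure: fixes k :: "'n::finite option \<Rightarrow> nat" assumes "h \<ge> 0" "\<tau> \<ge> 0"
  shows "measure lborel (cell a h \<tau> k) \<le> h ^ CARD('n) * \<tau>"
proof -
  let ?B = "cbox ((\<chi> i. a + real (k (Some i)) * h), real (k None) * \<tau>)
     ((\<chi> i. a + (real (k (Some i)) + 1) * h), (real (k None) + 1) * \<tau>) :: ((real^'n) \<times> real) set"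
  have "measure lborel (cell a h \<tau> k) \<le> measure lborel ?B"
    by (intro measure_mono_fmeasurable cell_sub_cbox cell_sets)
       (auto intro!: fmeasurableI emeasure_bounded_finite bounded_cbox)
  also have "\<dots> = h ^ CARD('n) * \<tau>"
    unfolding content_Pair using assms
  proof (subst content_cbox_cart)
    have "(\<chi> i. a + real (k (Some i)) * h) \<in> cbox (\<chi> i. a + real (k (Some i)) * h) (\<chi> i. a + (real (k (Some i)) + 1) * h)"
      using assms by (auto simp: mem_box_cart algebra_simps)
    then show "cbox (\<chi> i. a + real (k (Some i)) * h) (\<chi> i. a + (real (k (Some i)) + 1) * h) \<noteq> {}" by blast
  qed (use assms in \<open>auto simp: algebra_simps\<close>)
  finally show ?thesis .
qed


lemma ceil_cell:
  fixes x s :: real assumes "s > 0" "x > 0"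
  shows "real (nat (\<lceil>x / s\<rceil> - 1)) * s < x \<and> x \<le> (real (nat (\<lceil>x / s\<rceil> - 1)) + 1) * s"
proof -
  have c1: "\<lceil>x / s\<rceil> \<ge> 1" using assms by simp
  then have e: "real (nat (\<lceil>x / s\<rceil> - 1)) = of_int \<lceil>x / s\<rceil> - 1" by simp
  have h1: "of_int \<lceil>x / s\<rceil> - 1 < x / s" and h2: "x / s \<le> of_int \<lceil>x / s\<rceil>" using ceiling_correct by auto
  have A: "(of_int \<lceil>x / s\<rceil> - 1) * s < x" using h1 assms by (simp add: less_divide_eq)
  have B: "x \<le> of_int \<lceil>x / s\<rceil> * s" using pos_divide_le_eq[OF assms(1)] h2 by blast
  show ?thesis unfolding e using A B by (simp add: algebra_simps)
qed

lemma ceil_bound: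
  fixes x s :: real assumes "s > 0" "x \<le> real M * s"
  shows "nat (\<lceil>x / s\<rceil> - 1) \<le> M - 1"
proof -
  have "x / s \<le> real M" using assms by (simp add: field_simps)
  then have "\<lceil>x / s\<rceil> \<le> int M" by (simp add: ceiling_le_iff)
  then show ?thesis by linarith
qed

lemma ceil_mono:
  fixes x y s :: real assumes "s > 0" "x \<le> y"
  shows "nat (\<lceil>x / s\<rceil> - 1) \<le> nat (\<lceil>y / s\<rceil> - 1)"
proof -
  have "x / s \<le> y / s" using assms by (simp add: divide_right_mono)
  then have "\<lceil>x / s\<rceil> \<le> \<lceil>y / s\<rceil>" by (rule ceiling_mono)
  then show ?thesis by linarith
qed

definition idx :: "real \<Rightarrow> real \<Rightarrow> real \<Rightarrow> ((real^'n) \<times> real) \<Rightarrow> 'n option \<Rightarrow> nat" where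
  "idx a h \<tau> p d = nat (\<lceil>crd a p d / stp h \<tau> d\<rceil> - 1)"

lemma stp_pos: "h > 0 \<Longrightarrow> \<tau> > 0 \<Longrightarrow> stp h \<tau> d > 0"
  by (auto simp: stp_def split: option.splits)

lemma idx_in_cell: assumes "h > 0" "\<tau> > 0" "\<And>d. crd a p d > 0"
  shows "p \<in> cell a h \<tau> (idx a h \<tau> p)"
  unfolding cell_def idx_def using ceil_cell[OF stp_pos[OF assms(1,2)] assms(3)] by blast

lemma idx_bound: assumes "h > 0" "\<tau> > 0" "crd a p d \<le> real M * stp h \<tau> d"
  shows "idx a h \<tau> p d \<le> M - 1"
  unfolding idx_def using ceil_bound[OF stp_pos[OF assms(1,2)] assms(3)] .

lemma idx_mono: assumes "h > 0" "\<tau> > 0" "st_less p q"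
  shows "idx a h \<tau> p \<le> idx a h \<tau> q"
proof (rule le_funI)
  fix d
  have "crd a p d \<le> crd a q d" using assms(3)
    by (auto simp: crd_def st_less_def vlt_def less_imp_le split: option.splits)
  then show "idx a h \<tau> p d \<le> idx a h \<tau> q d"
    unfolding idx_def by (rule ceil_mono[OF stp_pos[OF assms(1,2)]])
qed

definition dirs :: "'d::finite list" where "dirs = (SOME xs. distinct xs \<and> set xs = UNIV)"

lemma dirs: "distinct (dirs::'d::finite list) \<and> set (dirs::'d list) = UNIV"
proof -
  have "\<exists>xs::'d list. distinct xs \<and> set xs = UNIV"
    using finite_distinct_list[of "UNIV::'d set"] by auto
  from someI_ex[OF this] show ?thesis unfolding dirs_def .
qed

definition steps :: "('d::finite \<Rightarrow> nat) \<Rightarrow> ('d \<Rightarrow> nat) \<Rightarrow> 'd list" where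
  "steps a b = concat (map (\<lambda>d. replicate (b d - a d) d) dirs)"

lemma count_concat: "count_list (concat xss) x = sum_list (map (\<lambda>xs. count_list xs x) xss)"
  by (induction xss) auto

lemma count_replicate: "count_list (replicate n y) x = (if y = x then n else 0)"
  by (induction n) auto

lemma count_steps: "count_list (steps a b) x = b x - a x"
proof -
  have "count_list (steps a b) x = sum_list (map (\<lambda>d. if d = x then b d - a d else 0) dirs)"
    unfolding steps_def count_concat by (simp add: count_replicate comp_def)
  also have "\<dots> = (\<Sum>d\<in>UNIV. if d = x then b d - a d else 0)"
    using dirs by (subst sum_list_distinct_conv_sum_set) auto
  also have "\<dots> = b x - a x" by simp
  finally show ?thesis .
qed

lemma length_sum_count: "length (w::'d::finite list) = (\<Sum>x\<in>UNIV. count_list w x)"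
proof (induction w)
  case (Cons y w)
  have "(\<Sum>x\<in>UNIV. count_list (y # w) x) = (\<Sum>x\<in>UNIV. count_list w x + (if y = x then 1 else 0))"
    by (intro sum.cong) auto
  also have "\<dots> = (\<Sum>x\<in>UNIV. count_list w x) + 1" by (simp add: sum.distrib)
  finally show ?case using Cons by simp
qed simp

definition pos :: "('d \<Rightarrow> nat) \<Rightarrow> 'd list \<Rightarrow> nat \<Rightarrow> 'd \<Rightarrow> nat" where
  "pos a w j = (\<lambda>x. a x + count_list (take j w) x)"

lemma walk:
  fixes I :: "('d::finite \<Rightarrow> nat) list"
  assumes "sorted_wrt (\<le>) I" "\<forall>b\<in>set I. a \<le> b \<and> b \<le> Bd" "a \<le> Bd"
  shows "\<exists>w. (\<forall>b\<in>set I. \<exists>j\<le>length w. pos a w j = b) \<and> (\<forall>x. a x + count_list w x \<le> Bd x)"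
  using assms
proof (induction I arbitrary: a)
  case Nil
  then show ?case by (intro exI[of _ "[]"]) (auto simp: le_fun_def)
next
  case (Cons b I)
  then have ab: "a \<le> b" and bB: "b \<le> Bd" and sI: "sorted_wrt (\<le>) I" and bI: "\<forall>c\<in>set I. b \<le> c \<and> c \<le> Bd"
    by auto
  obtain w' where w': "\<forall>c\<in>set I. \<exists>j\<le>length w'. pos b w' j = c" "\<forall>x. b x + count_list w' x \<le> Bd x"
    using Cons.IH[OF sI bI bB] by blast
  define w where "w = steps a b @ w'"
  have pb: "pos a w (length (steps a b)) = b"
    using ab unfolding pos_def w_def by (auto simp: count_steps le_fun_def)
  have pc: "pos a w (length (steps a b) + j) = pos b w' j" for j
  proof (rule ext)
    fix x have "a x \<le> b x" using ab by (simp add: le_fun_def)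
    then show "pos a w (length (steps a b) + j) x = pos b w' j x" unfolding pos_def w_def by (simp add: count_steps)
  qed
  show ?case
  proof (intro exI[of _ w] conjI ballI allI)
    fix c assume "c \<in> set (b # I)"
    then consider "c = b" | "c \<in> set I" by auto
    then show "\<exists>j\<le>length w. pos a w j = c"
    proof cases
      case 1 then show ?thesis using pb by (intro exI[of _ "length (steps a b)"]) (auto simp: w_def)
    next
      case 2
      then obtain j where "j \<le> length w'" "pos b w' j = c" using w'(1) by blast
      then show ?thesis using pc by (intro exI[of _ "length (steps a b) + j"]) (auto simp: w_def)
    qed
  next
    fix x have "a x \<le> b x" using ab by (simp add: le_fun_def)
    then show "a x + count_list w x \<le> Bd x"
      using w'(2)[rule_format, of x] unfolding w_def by (simp add: count_steps)
  qed
qed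

definition Uset :: "real \<Rightarrow> real \<Rightarrow> real \<Rightarrow> 'n option list \<Rightarrow> ((real^'n) \<times> real) set" where
  "Uset a h \<tau> w = (\<Union>j\<in>{..length w}. cell a h \<tau> (pos (\<lambda>_. 0) w j))"

lemma Uset_sets: "Uset a h \<tau> (w :: 'n::finite option list) \<in> sets lborel"
  unfolding Uset_def by (intro sets.finite_UN cell_sets) auto

lemma Uset_bounded: "bounded (Uset a h \<tau> (w :: 'n::finite option list))"
  unfolding Uset_def by (rule bounded_UN) (auto intro: cell_bounded)

lemma Uset_pos: "\<tau> > 0 \<Longrightarrow> Uset a h \<tau> (w :: 'n::finite option list) \<subseteq> UNIV \<times> {0<..}"
  unfolding Uset_def using cell_pos by blast

lemma Uset_measure: fixes w :: "'n::finite option list" assumes "h \<ge> 0" "\<tau> \<ge> 0"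
  shows "measure lborel (Uset a h \<tau> w) \<le> (real (length w) + 1) * (h ^ CARD('n) * \<tau>)"
proof -
  have "measure lborel (Uset a h \<tau> w) \<le> (\<Sum>j\<in>{..length w}. measure lborel (cell a h \<tau> (pos (\<lambda>_. 0) w j)))"
    unfolding Uset_def by (intro measure_UNION_le cell_sets) auto
  also have "\<dots> \<le> (\<Sum>j\<in>{..length w}. h ^ CARD('n) * \<tau>)"
    by (intro sum_mono cell_measure assms)
  also have "\<dots> = (real (length w) + 1) * (h ^ CARD('n) * \<tau>)" by simp
  finally show ?thesis .
qed

lemma sorted_wrt_irrefl_distinct: "sorted_wrt R xs \<Longrightarrow> (\<And>x. \<not> R x x) \<Longrightarrow> distinct xs"
  by (induction xs) auto

lemma st_less_irrefl: "\<not> st_less p p"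
  by (simp add: st_less_def)

lemma chain_cover:
  fixes c :: "((real^'n::finite) \<times> real) list"
  assumes h: "h > 0" "\<tau> > 0" and sc: "sorted_wrt st_less c"
    and box: "\<forall>p\<in>set c. \<forall>d. 0 < crd a p d \<and> crd a p d \<le> real M * stp h \<tau> d"
  shows "\<exists>w. length w \<le> CARD('n option) * (M - 1) \<and> set c \<subseteq> Uset a h \<tau> w"
proof -
  define I where "I = map (idx a h \<tau>) c"
  have sI: "sorted_wrt (\<le>) I"
    unfolding I_def sorted_wrt_map
    by (rule sorted_wrt_mono_rel[OF _ sc]) (use idx_mono[OF h] in blast)
  have bI: "\<forall>b\<in>set I. (\<lambda>_. 0) \<le> b \<and> b \<le> (\<lambda>_. M - 1)"
  proof
    fix b assume "b \<in> set I"
    then obtain p where p: "p \<in> set c" "b = idx a h \<tau> p" unfolding I_def by auto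
    have "idx a h \<tau> p d \<le> M - 1" for d using box p(1) by (intro idx_bound[OF h]) auto
    then show "(\<lambda>_. 0) \<le> b \<and> b \<le> (\<lambda>_. M - 1)" using p(2) by (auto simp: le_fun_def)
  qed
  obtain w where w: "\<forall>b\<in>set I. \<exists>j\<le>length w. pos (\<lambda>_. 0) w j = b"
      "\<forall>x. 0 + count_list w x \<le> M - 1"
    using walk[OF sI bI] by (auto simp: le_fun_def)
  have "length w = (\<Sum>x\<in>UNIV. count_list w x)" by (rule length_sum_count)
  also have "\<dots> \<le> (\<Sum>x\<in>(UNIV::'n option set). M - 1)" using w(2) by (intro sum_mono) auto
  also have "\<dots> = CARD('n option) * (M - 1)" by simp
  finally have lw: "length w \<le> CARD('n option) * (M - 1)" .
  have "set c \<subseteq> Uset a h \<tau> w"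
  proof
    fix p assume p: "p \<in> set c"
    then have "idx a h \<tau> p \<in> set I" unfolding I_def by auto
    then obtain j where j: "j \<le> length w" "pos (\<lambda>_. 0) w j = idx a h \<tau> p" using w(1) by blast
    have "p \<in> cell a h \<tau> (idx a h \<tau> p)" using idx_in_cell[OF h] box p by blast
    then have "p \<in> cell a h \<tau> (pos (\<lambda>_. 0) w j)" using j(2) by simp
    then show "p \<in> Uset a h \<tau> w" unfolding Uset_def using j(1) by blast
  qed
  with lw show ?thesis by blast
qed


lemma scale_event:
  fixes N :: "'a \<Rightarrow> ((real^'n::finite) \<times> real) set" and M :: "'a measure" and k :: nat
  assumes pp: "poisson_pp M N" and qt: "q > 0" "t > 0" "R \<ge> 0" and Mc: "Mc \<ge> 1"
  defines "h \<equiv> (q + R) / real Mc" and "\<tau> \<equiv> t / real Mc" and "L \<equiv> CARD('n option) * Mc"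
  defines "W \<equiv> {w::'n option list. set w \<subseteq> UNIV \<and> length w \<le> L}"
  defines "E \<equiv> (\<Union>w\<in>W. {\<omega>\<in>space M. k \<le> card (N \<omega> \<inter> Uset (-R) h \<tau> w)})"
  shows "E \<in> sets M"
    and "measure M E \<le> real (card W) * (((real L + 1) * (h ^ CARD('n) * \<tau>)) ^ k / fact k)"
    and "\<forall>\<omega>\<in>space M - E. chainH (N \<omega>) (- (R *\<^sub>R 1)) (q *\<^sub>R 1) t \<le> ereal (real k)"
proof -
  have hpos: "h > 0" "\<tau> > 0" using qt Mc unfolding h_def \<tau>_def by auto
  have finW: "finite W" unfolding W_def by (rule finite_lists_length_le) simp
  let ?U = "\<lambda>w. Uset (-R) h \<tau> (w::'n option list)"
  have ev: "{\<omega>\<in>space M. k \<le> card (N \<omega> \<inter> ?U w)} \<in> sets M" 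
    and evm: "w \<in> W \<Longrightarrow> measure M {\<omega>\<in>space M. k \<le> card (N \<omega> \<inter> ?U w)} \<le> ((real L + 1) * (h ^ CARD('n) * \<tau>)) ^ k / fact k" for w
  proof -
    show "{\<omega>\<in>space M. k \<le> card (N \<omega> \<inter> ?U w)} \<in> sets M"
      using poisson_card_tail(1)[OF pp Uset_sets Uset_bounded Uset_pos[OF hpos(2)] order.refl] .
    assume "w \<in> W"
    then have "real (length w) + 1 \<le> real L + 1" unfolding W_def by auto
    moreover have X0: "0 \<le> h ^ CARD('n) * \<tau>" using hpos by simp
    moreover have "measure lborel (?U w) \<le> (real (length w) + 1) * (h ^ CARD('n) * \<tau>)"
      by (rule Uset_measure) (use hpos in auto)
    ultimately have "measure lborel (?U w) \<le> (real L + 1) * (h ^ CARD('n) * \<tau>)"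
      by (meson mult_right_mono order_trans)
    from poisson_card_tail(2)[OF pp Uset_sets Uset_bounded Uset_pos[OF hpos(2)] this]
    show "measure M {\<omega>\<in>space M. k \<le> card (N \<omega> \<inter> ?U w)} \<le> ((real L + 1) * (h ^ CARD('n) * \<tau>)) ^ k / fact k" .
  qed
  show "E \<in> sets M" unfolding E_def using finW ev by (intro sets.finite_UN) auto
  have "measure M E \<le> (\<Sum>w\<in>W. measure M {\<omega>\<in>space M. k \<le> card (N \<omega> \<inter> ?U w)})"
    unfolding E_def using finW ev by (intro measure_UNION_le) auto
  also have "\<dots> \<le> (\<Sum>w\<in>W. ((real L + 1) * (h ^ CARD('n) * \<tau>)) ^ k / fact k)"
    by (intro sum_mono evm)
  also have "\<dots> = real (card W) * (((real L + 1) * (h ^ CARD('n) * \<tau>)) ^ k / fact k)" by simp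
  finally show "measure M E \<le> real (card W) * (((real L + 1) * (h ^ CARD('n) * \<tau>)) ^ k / fact k)" .
  show "\<forall>\<omega>\<in>space M - E. chainH (N \<omega>) (- (R *\<^sub>R 1)) (q *\<^sub>R 1) t \<le> ereal (real k)"
  proof
    fix \<omega> assume \<omega>: "\<omega> \<in> space M - E"
    have fin0: "\<forall>\<omega>\<in>space M. N \<omega> \<subseteq> UNIV \<times> {0<..} \<and> (\<forall>B. bounded B \<longrightarrow> finite (N \<omega> \<inter> B))"
      using conjunct1[OF conjunct2[OF pp[unfolded poisson_pp_def]]] .
    have fin: "finite (N \<omega> \<inter> B)" if "bounded B" for B
      using fin0 \<omega> that by blast
    show "chainH (N \<omega>) (- (R *\<^sub>R 1)) (q *\<^sub>R 1) t \<le> ereal (real k)"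
      unfolding chainH_def
    proof (rule SUP_least)
      fix c assume "c \<in> {c. set c \<subseteq> N \<omega> \<inter> {(\<eta>, s). vlt (- (R *\<^sub>R 1)) \<eta> \<and> \<eta> \<le> q *\<^sub>R 1 \<and> 0 < s \<and> s \<le> t}
                 \<and> sorted_wrt st_less c}"
      then have c: "set c \<subseteq> N \<omega>" "sorted_wrt st_less c"
        and cb: "\<And>p. p \<in> set c \<Longrightarrow> vlt (- (R *\<^sub>R 1)) (fst p) \<and> fst p \<le> q *\<^sub>R 1 \<and> 0 < snd p \<and> snd p \<le> t"
        by auto
      have box: "\<forall>p\<in>set c. \<forall>d. 0 < crd (-R) p d \<and> crd (-R) p d \<le> real Mc * stp h \<tau> d"
      proof (intro ballI allI)
        fix p d assume p: "p \<in> set c"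
        from cb[OF p] have a1: "\<And>i. - R < fst p $ i" "\<And>i. fst p $ i \<le> q" "0 < snd p" "snd p \<le> t"
          by (auto simp: vlt_def less_eq_vec_def)
        have "real Mc * h = q + R" "real Mc * \<tau> = t" using Mc unfolding h_def \<tau>_def by auto
        then show "0 < crd (-R) p d \<and> crd (-R) p d \<le> real Mc * stp h \<tau> d"
        proof (cases d)
          case None
          then show ?thesis using a1(3,4) \<open>real Mc * \<tau> = t\<close> by (simp add: crd_def stp_def)
        next
          case (Some i)
          have "- R < fst p $ i" "fst p $ i \<le> q" using a1(1,2) by auto
          then show ?thesis using Some \<open>real Mc * h = q + R\<close> by (simp add: crd_def stp_def)
        qed
      qed
      obtain w where w: "length w \<le> CARD('n option) * (Mc - 1)" "set c \<subseteq> ?U w"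
        using chain_cover[OF hpos c(2) box] by blast
      have "CARD('n option) * (Mc - 1) \<le> CARD('n option) * Mc" by (rule mult_le_mono2) simp
      then have "w \<in> W" unfolding W_def L_def using w(1) by simp
      then have lt: "card (N \<omega> \<inter> ?U w) < k" using \<omega> unfolding E_def by auto
      have "length c = card (set c)"
        using sorted_wrt_irrefl_distinct[OF c(2) st_less_irrefl] by (simp add: distinct_card)
      also have "\<dots> \<le> card (N \<omega> \<inter> ?U w)"
        using c(1) w(2) by (intro card_mono fin Uset_bounded) auto
      finally show "ereal (real (length c)) \<le> ereal (real k)" using lt by simp
    qed
  qed
qed

lemma numerics:
  fixes m d c :: nat and q t :: real
  assumes d: "d \<ge> 1" and m: "m \<ge> 1" and q: "q > 0" and t: "t > 0" and c: "c \<ge> 1"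
    and c1: "4 * exp 1 * real (d+1) * ((q+1)^d * t) \<le> real c"
    and c2: "2 * (2 * (d+1))^(d+1) \<le> (2::nat)^c"
  shows "real (\<Sum>i\<le>(d+1) * m^d. (d+1)^i) *
     (((real ((d+1) * m^d) + 1) * (((q + real m^(d+1)) / real (m^d))^d * (t / real (m^d)))) ^ (c * m^d)
       / fact (c * m^d)) \<le> (1/2)^m"
proof -
  define Mc where "Mc = m^d"
  define R where "R = real m^(d+1)"
  define D where "D = d + 1"
  define L where "L = D * Mc"
  define k where "k = c * Mc"
  define A where "A = (q+1)^d * t"
  have Mc1: "Mc \<ge> 1" using m unfolding Mc_def by simp
  have R1: "R \<ge> 1" using m unfolding R_def by (intro one_le_power) simp
  have A0: "A > 0" using q t unfolding A_def by simp
  have k1: "k \<ge> 1" using c Mc1 unfolding k_def by simp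
  have McR: "real Mc ^ (d+1) = R ^ d"
  proof -
    have "real Mc ^ (d+1) = real m ^ (d*(d+1))" unfolding Mc_def by (simp only: of_nat_power power_mult[symmetric])
    also have "\<dots> = (real m^(d+1))^d" by (metis power_mult mult.commute)
    finally show ?thesis unfolding R_def .
  qed
  have "((q + R) / real Mc)^d * (t / real Mc) = (q + R)^d * t / real Mc ^ (d+1)"
    by (simp add: power_divide)
  also have "\<dots> = ((q + R) / R)^d * t" using McR by (simp add: power_divide)
  also have "\<dots> \<le> A"
  proof -
    have "(q + R) / R \<le> q + 1" using R1 q by (simp add: divide_le_eq algebra_simps)
    moreover have "0 \<le> (q + R) / R" using R1 q by simp
    ultimately have "((q + R) / R)^d \<le> (q+1)^d" by (intro power_mono)
    then show ?thesis unfolding A_def using t by simp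
  qed
  finally have vol: "((q + R) / real Mc)^d * (t / real Mc) \<le> A" .
  have vol0: "0 \<le> ((q + R) / real Mc)^d * (t / real Mc)" using q t R1 by simp
  define \<mu> where "\<mu> = (real L + 1) * (((q + R) / real Mc)^d * (t / real Mc))"
  have "1 \<le> D * Mc" using Mc1 unfolding D_def by simp
  then have "real L + 1 \<le> 2 * real L" unfolding L_def by linarith
  then have L1: "real L + 1 \<le> 2 * real D * real Mc" unfolding L_def by simp
  have mu0: "0 \<le> \<mu>" unfolding \<mu>_def by (rule mult_nonneg_nonneg[OF _ vol0]) simp
  have mu: "\<mu> \<le> 2 * real D * real Mc * A"
    unfolding \<mu>_def by (rule mult_mono[OF L1 vol _ vol0]) simp
  have "\<mu>^k / fact k \<le> (exp 1 * \<mu> / real k)^k" by (rule fact_bound[OF mu0 k1])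
  also have "\<dots> \<le> (1/2)^k"
  proof (rule power_mono)
    have "exp 1 * \<mu> \<le> exp 1 * (2 * real D * real Mc * A)" using mu by simp
    also have "\<dots> = (2 * exp 1 * real D * A) * real Mc" by simp
    also have "\<dots> \<le> (real c / 2) * real Mc"
      using c1 Mc1 unfolding A_def D_def by (intro mult_right_mono) auto
    also have "\<dots> = real k / 2" unfolding k_def by simp
    finally show "exp 1 * \<mu> / real k \<le> 1/2" using k1 by (simp add: divide_le_eq)
    show "0 \<le> exp 1 * \<mu> / real k" using mu0 by simp
  qed
  finally have tail: "\<mu>^k / fact k \<le> (1/2)^k" .
  have "(\<Sum>i\<le>L. D^i) \<le> (\<Sum>i\<le>L. D^L)"
    by (intro sum_mono power_increasing) (auto simp: D_def)
  also have "\<dots> = (L+1) * D^L" by simp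
  also have "\<dots> \<le> 2^L * D^L" using Suc_leI[OF less_exp[of L]] by (intro mult_right_mono) auto
  also have "\<dots> = (2*D)^L" by (simp add: power_mult_distrib)
  finally have cnt: "(\<Sum>i\<le>L. D^i) \<le> (2*D)^L" .
  have "real (\<Sum>i\<le>L. D^i) * (\<mu>^k / fact k) \<le> real ((2*D)^L) * (1/2)^k"
  proof -
    have cntr: "real (\<Sum>i\<le>L. D^i) \<le> real ((2*D)^L)" using cnt by (simp only: of_nat_le_iff)
    have t0: "0 \<le> \<mu>^k / fact k" using mu0 by simp
    show ?thesis by (rule mult_mono[OF cntr tail _ t0]) simp
  qed
  also have "\<dots> = (real ((2*D)^D) * (1/2)^c)^Mc"
  proof -
    have e1: "real ((2*D)^L) = real ((2*D)^D) ^ Mc" unfolding L_def by (simp only: of_nat_power power_mult)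
    have e2: "(1/2::real)^k = ((1/2)^c)^Mc" unfolding k_def by (simp only: power_mult)
    show ?thesis unfolding e1 e2 by (rule power_mult_distrib[symmetric])
  qed
  also have "\<dots> \<le> (1/2)^Mc"
  proof (rule power_mono)
    have "2 * real ((2*D)^D) \<le> real ((2::nat)^c)" using c2 unfolding D_def by (simp only: of_nat_le_iff of_nat_mult[symmetric] of_nat_numeral)
    then have "real ((2*D)^D) \<le> 2^c / 2" by simp
    then show "real ((2*D)^D) * (1/2)^c \<le> 1/2" by (simp add: power_one_over field_simps)
  qed simp
  also have "\<dots> \<le> (1/2)^m"
  proof -
    have "m^1 \<le> m^d" using m d by (intro power_increasing) auto
    then have "m \<le> Mc" unfolding Mc_def by simp
    then show ?thesis by (rule power_decreasing) auto
  qed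
  finally show ?thesis unfolding \<mu>_def L_def D_def k_def Mc_def R_def .
qed

lemma card_opt: "CARD('n::finite option) = CARD('n) + 1"
proof -
  have "(UNIV :: 'n option set) = insert None (Some ` UNIV)"
    by (auto intro: option.exhaust)
  then show ?thesis by (simp add: card_image)
qed

lemma good_event:
  fixes N :: "'a \<Rightarrow> ((real^'n::finite) \<times> real) set" and M :: "'a measure"
  assumes pp: "poisson_pp M N" and q: "q > 0" and t: "t > 0" and eps: "\<epsilon> > 0"
  shows "\<exists>A\<in>sets M. measure M A \<ge> 1 - \<epsilon> \<and> (\<exists>(c::nat) m0. m0 \<ge> 1 \<and>
     (\<forall>\<omega>\<in>A. \<forall>m\<ge>m0. chainH (N \<omega>) (- ((real m ^ (CARD('n)+1)) *\<^sub>R 1)) (q *\<^sub>R 1) t \<le> ereal (real (c * m ^ CARD('n)))))"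
proof -
  have ps: "prob_space M" using pp unfolding poisson_pp_def by blast
  then interpret prob_space M .
  define d where "d = CARD('n)"
  have d1: "d \<ge> 1" unfolding d_def by (simp add: Suc_leI)
  define c where "c = nat \<lceil>4 * exp 1 * real (d+1) * ((q+1)^d * t)\<rceil> + 2 * (2 * (d+1))^(d+1) + 1"
  have c1: "4 * exp 1 * real (d+1) * ((q+1)^d * t) \<le> real c"
    unfolding c_def by linarith
  have c2: "2 * (2 * (d+1))^(d+1) \<le> (2::nat)^c"
  proof -
    have "2 * (2 * (d+1))^(d+1) \<le> c" unfolding c_def by simp
    also have "c \<le> 2^c" using less_exp[of c] by simp
    finally show ?thesis .
  qed
  have cge: "c \<ge> 1" unfolding c_def by simp
  define E where "E m = (\<Union>w\<in>{w::'n option list. set w \<subseteq> UNIV \<and> length w \<le> CARD('n option) * m^d}.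
      {\<omega>\<in>space M. c * m^d \<le> card (N \<omega> \<inter> Uset (- (real m ^ (d+1))) ((q + real m ^ (d+1)) / real (m^d)) (t / real (m^d)) w)})" for m
  have Esets: "E m \<in> sets M" if "m \<ge> 1" for m
    unfolding E_def using that by (intro scale_event(1)[OF pp q t]) auto
  have Emeas: "measure M (E m) \<le> (1/2)^m" if m: "m \<ge> 1" for m
  proof -
    have "measure M (E m) \<le> real (card {w::'n option list. set w \<subseteq> UNIV \<and> length w \<le> CARD('n option) * m^d}) *
       (((real (CARD('n option) * m^d) + 1) * (((q + real m ^ (d+1)) / real (m^d)) ^ CARD('n) * (t / real (m^d)))) ^ (c * m^d) / fact (c * m^d))"
      unfolding E_def using m by (intro scale_event(2)[OF pp q t]) auto
    also have "\<dots> = real (\<Sum>i\<le>(d+1) * m^d. (d+1)^i) *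
       (((real ((d+1) * m^d) + 1) * (((q + real m^(d+1)) / real (m^d))^d * (t / real (m^d)))) ^ (c * m^d) / fact (c * m^d))"
      by (subst card_lists_length_le) (auto simp: card_opt d_def)
    also have "\<dots> \<le> (1/2)^m" by (rule numerics[OF d1 m q t cge c1 c2])
    finally show ?thesis .
  qed
  have Egood: "chainH (N \<omega>) (- ((real m ^ (d+1)) *\<^sub>R 1)) (q *\<^sub>R 1) t \<le> ereal (real (c * m^d))"
    if m: "m \<ge> 1" and \<omega>: "\<omega> \<in> space M - E m" for m \<omega>
  proof -
    have "\<forall>\<omega>\<in>space M - E m. chainH (N \<omega>) (- ((real m ^ (d+1)) *\<^sub>R 1)) (q *\<^sub>R 1) t \<le> ereal (real (c * m^d))"
      unfolding E_def using m by (intro scale_event(3)[OF pp q t]) auto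
    then show ?thesis using \<omega> by blast
  qed
  obtain m1 where m1: "(1/2::real)^m1 < \<epsilon>/2" using real_arch_pow_inv[of "\<epsilon>/2" "1/2"] eps by auto
  define m0 where "m0 = max m1 1"
  have m0: "m0 \<ge> 1" "(1/2::real)^m0 \<le> \<epsilon>/2"
  proof -
    show "m0 \<ge> 1" unfolding m0_def by simp
    have "m1 \<le> m0" unfolding m0_def by simp
    then have pd: "(1/2::real)^m0 \<le> (1/2)^m1" by (rule power_decreasing) auto
    show "(1/2::real)^m0 \<le> \<epsilon>/2" using pd m1 by linarith
  qed
  define F where "F j = E (j + m0)" for j
  define A where "A = space M - (\<Union>j. F j)"
  have Fsets: "range F \<subseteq> sets M" unfolding F_def using m0 by (auto intro!: Esets)
  have Fm: "measure M (F j) \<le> (1/2)^m0 * (1/2)^j" for j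
    unfolding F_def using Emeas[of "j + m0"] m0 by (simp add: power_add mult.commute)
  have sg: "summable (\<lambda>j. (1/2::real)^m0 * (1/2)^j)" by (intro summable_mult summable_geometric) simp
  have sF: "summable (\<lambda>j. measure M (F j))"
    by (rule summable_comparison_test[OF _ sg]) (use Fm in auto)
  have "measure M (\<Union>j. F j) \<le> (\<Sum>j. measure M (F j))"
    by (rule finite_measure_subadditive_countably[OF Fsets sF])
  also have "\<dots> \<le> (\<Sum>j. (1/2::real)^m0 * (1/2)^j)"
    by (rule suminf_le[OF _ sF sg]) (use Fm in auto)
  also have "\<dots> = (1/2)^m0 * 2"
    by (subst suminf_mult) (auto simp: suminf_geometric)
  also have "\<dots> \<le> \<epsilon>" using m0(2) by simp
  finally have Um: "measure M (\<Union>j. F j) \<le> \<epsilon>" .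
  have Usets: "(\<Union>j. F j) \<in> sets M" using Fsets by auto
  have Asets: "A \<in> sets M" unfolding A_def using Usets by auto
  have "measure M A = 1 - measure M (\<Union>j. F j)"
    unfolding A_def using Usets prob_space by (subst finite_measure_compl) auto
  then have Am: "measure M A \<ge> 1 - \<epsilon>" using Um by simp
  have Ag: "\<forall>\<omega>\<in>A. \<forall>m\<ge>m0. chainH (N \<omega>) (- ((real m ^ (CARD('n)+1)) *\<^sub>R 1)) (q *\<^sub>R 1) t \<le> ereal (real (c * m ^ CARD('n)))"
  proof (intro ballI allI impI)
    fix \<omega> m assume \<omega>: "\<omega> \<in> A" and m: "m0 \<le> m"
    then have "\<omega> \<in> space M - E m" unfolding A_def F_def
      by (auto dest!: spec[of _ "m - m0"] simp: m)
    then show "chainH (N \<omega>) (- ((real m ^ (CARD('n)+1)) *\<^sub>R 1)) (q *\<^sub>R 1) t \<le> ereal (real (c * m ^ CARD('n)))"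
      using Egood[of m \<omega>] m m0(1) unfolding d_def by simp
  qed
  show ?thesis using Asets Am Ag m0(1) by blast
qed

lemma linf_ge: "\<bar>y $ i\<bar> \<le> linf (y :: real^'n::finite)"
  unfolding linf_def by (rule Max_ge) auto

lemma linf_nonneg: "0 \<le> linf (y :: real^'n::finite)"
  using linf_ge[of y] abs_ge_zero order_trans by blast

lemma chainH_nonneg: "0 \<le> chainH P y x t"
  unfolding chainH_def by (rule SUP_upper2[where i="[]"]) (auto simp: zero_ereal_def)

lemma chainH_mono:
  fixes y y' x x' :: "real^'n::finite"
  assumes "y' \<le> y" "x \<le> x'" "s \<le> s'"
  shows "chainH P y x s \<le> chainH P y' x' s'"
  unfolding chainH_def
proof (rule SUP_subset_mono)
  have vl: "\<And>\<eta>. vlt y \<eta> \<Longrightarrow> vlt y' \<eta>" using assms(1) unfolding vlt_def less_eq_vec_def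
    by (meson order_le_less_trans)
  have xl: "\<And>\<eta>. \<eta> \<le> x \<Longrightarrow> \<eta> \<le> x'" using assms(2) by (meson order_trans)
  show "{c. set c \<subseteq> P \<inter> {(\<eta>, sa). vlt y \<eta> \<and> \<eta> \<le> x \<and> 0 < sa \<and> sa \<le> s} \<and> sorted_wrt st_less c}
    \<subseteq> {c. set c \<subseteq> P \<inter> {(\<eta>, s). vlt y' \<eta> \<and> \<eta> \<le> x' \<and> 0 < s \<and> s \<le> s'} \<and> sorted_wrt st_less c}"
    using vl xl assms(3) by fastforce
qed simp

lemma partition_find:
  fixes s :: "nat \<Rightarrow> real"
  shows "s 0 \<le> x \<Longrightarrow> x < s m \<Longrightarrow> \<exists>k<m. s k \<le> x \<and> x < s (Suc k)"
proof (induction m)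
  case 0 then show ?case by simp
next
  case (Suc m)
  show ?case
  proof (cases "x < s m")
    case True then show ?thesis using Suc by (meson less_SucI)
  next
    case False then show ?thesis using Suc by (intro exI[of _ m]) auto
  qed
qed

lemma sigma_lower:
  fixes \<sigma> :: "real^'n::finite \<Rightarrow> ereal"
  assumes "in_Sigma \<sigma>" "q > 0"
  shows "\<exists>mK::real. \<forall>x. - (q *\<^sub>R 1) \<le> x \<and> x \<le> q *\<^sub>R 1 \<and> \<bar>\<sigma> x\<bar> \<noteq> \<infinity> \<longrightarrow> ereal mK \<le> \<sigma> x"
proof -
  have "q + 1 > 0" using assms by simp
  then obtain s :: "'n \<Rightarrow> nat \<Rightarrow> real" and m :: "'n \<Rightarrow> nat" where
    sm: "\<forall>i. s i 0 = -(q+1) \<and> s i (m i) = q+1 \<and> (\<forall>k < m i. s i k < s i (Suc k))"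
    and const: "\<forall>kk :: 'n \<Rightarrow> nat. (\<forall>i. kk i < m i) \<longrightarrow>
              (\<forall>x y. (\<forall>i. s i (kk i) \<le> x $ i \<and> x $ i < s i (Suc (kk i))) \<longrightarrow>
                     (\<forall>i. s i (kk i) \<le> y $ i \<and> y $ i < s i (Suc (kk i))) \<longrightarrow>
                     \<sigma> x = \<sigma> y)"
    using assms(1)[unfolded in_Sigma_def, THEN conjunct2, THEN conjunct2, THEN conjunct1, rule_format, OF \<open>q + 1 > 0\<close>]
    by (elim exE conjE) (rule that; assumption)
  define KK where "KK = Pi UNIV (\<lambda>i. {..<m i})"
  have finKK: "finite KK" unfolding KK_def using finite_PiE[of UNIV "\<lambda>i. {..<m i}"]
    by (simp add: PiE_UNIV_domain)
  define rep where "rep kk = (\<chi> i. s i (kk i))" for kk :: "'n \<Rightarrow> nat"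
  define V where "V = (\<lambda>kk. \<sigma> (rep kk)) ` KK"
  have finV: "finite V" unfolding V_def using finKK by simp
  have inV: "\<sigma> x \<in> V" if x: "- (q *\<^sub>R 1) \<le> x" "x \<le> q *\<^sub>R 1" for x
  proof -
    have "\<forall>i. \<exists>k<m i. s i k \<le> x $ i \<and> x $ i < s i (Suc k)"
    proof
      fix i
      have "- q \<le> x $ i" "x $ i \<le> q" using x by (auto simp: less_eq_vec_def)
      then have "s i 0 \<le> x $ i" "x $ i < s i (m i)" using sm by auto
      then show "\<exists>k<m i. s i k \<le> x $ i \<and> x $ i < s i (Suc k)" by (rule partition_find)
    qed
    then obtain kk where kk: "\<forall>i. kk i < m i \<and> s i (kk i) \<le> x $ i \<and> x $ i < s i (Suc (kk i))"
      using choice[of "\<lambda>i k. k < m i \<and> s i k \<le> x $ i \<and> x $ i < s i (Suc k)"] by blast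
    have "\<forall>i. s i (kk i) \<le> rep kk $ i \<and> rep kk $ i < s i (Suc (kk i))"
      unfolding rep_def using sm kk by auto
    then have "\<sigma> x = \<sigma> (rep kk)"
      by (intro const[rule_format]) (use kk in auto)
    moreover have "kk \<in> KK" unfolding KK_def using kk by auto
    ultimately show ?thesis unfolding V_def by auto
  qed
  define mK where "mK = Min (insert 0 (real_of_ereal ` V))"
  have "ereal mK \<le> \<sigma> x" if "- (q *\<^sub>R 1) \<le> x" "x \<le> q *\<^sub>R 1" "\<bar>\<sigma> x\<bar> \<noteq> \<infinity>" for x
  proof -
    have i1: "real_of_ereal (\<sigma> x) \<in> insert 0 (real_of_ereal ` V)" using inV[OF that(1,2)] by blast
    have i2: "finite (insert 0 (real_of_ereal ` V))" using finV by simp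
    have "mK \<le> real_of_ereal (\<sigma> x)" unfolding mK_def by (rule Min_le[OF i2 i1])
    then show ?thesis using that(3) by (cases "\<sigma> x") auto
  qed
  then show ?thesis
  proof (intro exI[of _ mK] allI impI)
    fix x assume h: "\<And>x. - (q *\<^sub>R 1) \<le> x \<Longrightarrow> x \<le> q *\<^sub>R 1 \<Longrightarrow> \<bar>\<sigma> x\<bar> \<noteq> \<infinity> \<Longrightarrow> ereal mK \<le> \<sigma> x"
      and x: "- (q *\<^sub>R 1) \<le> x \<and> x \<le> q *\<^sub>R 1 \<and> \<bar>\<sigma> x\<bar> \<noteq> \<infinity>"
    show "ereal mK \<le> \<sigma> x" using x by (intro h) auto
  qed
qed


lemma sigma_decay:
  fixes \<sigma> :: "real^'n::finite \<Rightarrow> ereal"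
  assumes "in_Sigma \<sigma>"
  shows "\<exists>R0. \<forall>z. z \<le> b \<and> linf z \<ge> R0 \<longrightarrow>
           ereal (linf z powr (- real CARD('n) / (real CARD('n) + 1))) * \<sigma> z < ereal B"
proof -
  define F where "F = (\<lambda>M::real. SUP y \<in> {y. y \<le> b \<and> linf y \<ge> M}.
              ereal (linf y powr (- real CARD('n) / (real CARD('n) + 1))) * \<sigma> y)"
  have "(F \<longlongrightarrow> -\<infinity>) at_top"
    using assms[unfolded in_Sigma_def, THEN conjunct2, THEN conjunct2, THEN conjunct2, rule_format, of b]
    unfolding F_def .
  then have "eventually (\<lambda>M. F M < ereal B) at_top" unfolding tendsto_MInfty by blast
  then obtain R0 where R0: "\<And>M. M \<ge> R0 \<Longrightarrow> F M < ereal B" unfolding eventually_at_top_linorder by blast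
  have "ereal (linf z powr (- real CARD('n) / (real CARD('n) + 1))) * \<sigma> z < ereal B"
    if "z \<le> b" "linf z \<ge> R0" for z
  proof -
    have "ereal (linf z powr (- real CARD('n) / (real CARD('n) + 1))) * \<sigma> z \<le> F R0"
      unfolding F_def by (rule SUP_upper) (use that in auto)
    also have "\<dots> < ereal B" using R0 by simp
    finally show ?thesis .
  qed
  then show ?thesis by blast
qed

lemma ereal_powr_bound:
  fixes r a c :: real and v :: ereal
  assumes "r > 0" "ereal (r powr (- a)) * v < ereal c"
  shows "v \<le> ereal (c * r powr a)"
proof (cases v)
  case (real x)
  have p: "r powr (- a) * r powr a = 1" using assms(1) by (simp add: powr_minus)
  have "r powr (- a) * x < c" using assms(2) real by simp
  then have "(r powr (- a) * x) * r powr a \<le> c * r powr a"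
    using assms(1) by (intro mult_right_mono) auto
  also have "(r powr (- a) * x) * r powr a = x" using p by (simp add: algebra_simps)
  finally show ?thesis using real by simp
next
  case PInf
  then have "ereal (r powr (- a)) * v = \<infinity>" using assms(1) by simp
  then show ?thesis using assms(2) by simp
next
  case MInf then show ?thesis by simp
qed

lemma chainH_far:
  fixes z :: "real^'n::finite" and c m0 :: nat
  assumes good: "\<forall>m\<ge>m0. chainH P (- ((real m ^ (CARD('n)+1)) *\<^sub>R 1)) (q *\<^sub>R 1) t \<le> ereal (real (c * m ^ CARD('n)))"
    and m0: "m0 \<ge> 1" and r: "linf z > real m0 ^ (CARD('n)+1)"
  shows "chainH P z (q *\<^sub>R 1) t \<le> ereal (real c * 2 ^ CARD('n) * linf z powr (real CARD('n) / (real CARD('n) + 1)))"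
proof -
  define d where "d = CARD('n)"
  define D where "D = d + 1"
  define r where "r = linf z"
  have r1: "r \<ge> 1" using r m0 unfolding r_def by (smt (verit) one_le_power of_nat_1 of_nat_mono)
  have ex: "\<exists>n. r \<le> real n ^ D"
  proof
    define n where "n = nat \<lceil>r\<rceil>"
    have n1: "real n \<ge> 1" "r \<le> real n" using r1 unfolding n_def by linarith+
    have "real n ^ 1 \<le> real n ^ D" by (rule power_increasing) (use n1 in \<open>auto simp: D_def\<close>)
    then have h: "real n \<le> real n ^ D" by (simp only: power_one_right)
    show "r \<le> real n ^ D" using h n1 by linarith
  qed
  define m where "m = (LEAST n. r \<le> real n ^ D)"
  have mD: "r \<le> real m ^ D" unfolding m_def using LeastI_ex[OF ex] .
  have lt: "\<not> r \<le> real n ^ D" if "n < m" for n using not_less_Least[OF that[unfolded m_def]] .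
  have mm0: "m > m0"
  proof (rule ccontr)
    assume "\<not> m0 < m"
    then have "real m ^ D \<le> real m0 ^ D" by (intro power_mono) auto
    then show False using mD r unfolding r_def D_def d_def by simp
  qed
  then have m2: "m \<ge> 2" using m0 by simp
  have m1D: "real (m - 1) ^ D < r" using lt[of "m - 1"] m2 by simp
  have zlow: "- ((real m ^ D) *\<^sub>R 1) \<le> z"
    unfolding less_eq_vec_def
  proof
    fix i
    have "\<bar>z $ i\<bar> \<le> r" unfolding r_def by (rule linf_ge)
    then show "(- ((real m ^ D) *\<^sub>R 1)) $ i \<le> z $ i" using mD by simp
  qed
  have "chainH P z (q *\<^sub>R 1) t \<le> chainH P (- ((real m ^ D) *\<^sub>R 1)) (q *\<^sub>R 1) t"
    by (rule chainH_mono[OF zlow]) auto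
  also have "\<dots> \<le> ereal (real (c * m ^ d))"
    using good mm0 unfolding D_def d_def by simp
  also have "real (c * m ^ d) \<le> real c * 2 ^ d * r powr (real d / (real d + 1))"
  proof -
    have "real m \<le> 2 * real (m - 1)" using m2 by simp
    then have "real m ^ d \<le> (2 * real (m - 1)) ^ d" by (intro power_mono) auto
    also have "\<dots> = 2 ^ d * real (m - 1) ^ d" by (simp add: power_mult_distrib)
    also have "real (m - 1) ^ d \<le> r powr (real d / (real d + 1))"
    proof -
      have pos: "real (m - 1) > 0" using m2 by simp
      have ex: "real D * (real d / (real d + 1)) = real d" unfolding D_def by (simp add: field_simps)
      have "(real (m - 1) powr real D) powr (real d / (real d + 1)) = real (m - 1) powr (real D * (real d / (real d + 1)))"
        by (rule powr_powr)
      also have "\<dots> = real (m - 1) powr real d" by (simp only: ex)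
      also have "\<dots> = real (m - 1) ^ d" by (rule powr_realpow[OF pos])
      finally have "(real (m - 1) powr real D) powr (real d / (real d + 1)) = real (m - 1) ^ d" .
      moreover have "real (m - 1) powr real D = real (m - 1) ^ D" by (rule powr_realpow[OF pos])
      ultimately have e: "real (m - 1) ^ d = (real (m - 1) ^ D) powr (real d / (real d + 1))" by simp
      also have "\<dots> \<le> r powr (real d / (real d + 1))"
        using m1D pos by (intro powr_mono2) auto
      finally show ?thesis .
    qed
    finally have "real m ^ d \<le> 2 ^ d * r powr (real d / (real d + 1))" by simp
    then show ?thesis by (simp add: mult.assoc mult_left_mono)
  qed
  finally show ?thesis unfolding r_def d_def by simp
qed

lemma det_main:
  fixes \<sigma> :: "real^'n::finite \<Rightarrow> ereal" and P :: "((real^'n) \<times> real) set"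
  assumes sig: "in_Sigma \<sigma>"
    and mK: "\<forall>x. - (q *\<^sub>R 1) \<le> x \<and> x \<le> q *\<^sub>R 1 \<and> \<bar>\<sigma> x\<bar> \<noteq> \<infinity> \<longrightarrow> ereal mK \<le> \<sigma> x"
    and Gfin: "\<forall>z. chainH P z (q *\<^sub>R 1) t \<noteq> \<infinity>"
    and far: "\<forall>z. z \<le> q *\<^sub>R 1 \<and> linf z > R \<longrightarrow> \<sigma> z + chainH P z (q *\<^sub>R 1) t \<le> ereal (mK - 1)"
    and s: "s \<in> {0..t}"
  shows "S_set (evolve \<sigma> P s) {- (q *\<^sub>R 1) .. q *\<^sub>R 1} \<subseteq> {- (R *\<^sub>R 1) .. q *\<^sub>R 1}"
proof
  have mono: "\<And>x y. x \<le> y \<Longrightarrow> \<sigma> x \<le> \<sigma> y" using sig unfolding in_Sigma_def by blast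
  let ?\<rho> = "evolve \<sigma> P s"
  fix y assume "y \<in> S_set ?\<rho> {- (q *\<^sub>R 1) .. q *\<^sub>R 1}"
  then obtain x where x: "- (q *\<^sub>R 1) \<le> x" "x \<le> q *\<^sub>R 1" and yS: "y \<in> S_pt ?\<rho> x"
    unfolding S_set_def by auto
  have fin: "?\<rho> x \<noteq> \<infinity>" "?\<rho> x \<noteq> -\<infinity>" and yx: "y \<le> x" and eq: "?\<rho> y = ?\<rho> x"
    using yS unfolding S_pt_def by (auto split: if_splits)
  have yq: "y \<le> q *\<^sub>R 1" using yx x(2) by (rule order_trans)
  have Hle: "chainH P z w s \<le> chainH P z (q *\<^sub>R 1) t" if "w \<le> q *\<^sub>R 1" for z w
    using that s by (intro chainH_mono) auto
  have Hnn: "0 \<le> chainH P z w s" for z w by (rule chainH_nonneg)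
  have L: "ereal mK \<le> ?\<rho> x"
  proof (cases "s = 0")
    case True
    then have "?\<rho> x = \<sigma> x" unfolding evolve_def by simp
    then show ?thesis using mK x fin by auto
  next
    case False
    then have rx: "?\<rho> x = (SUP z \<in> {z. z \<le> x}. \<sigma> z + chainH P z x s)" unfolding evolve_def by simp
    have up: "\<sigma> x + chainH P x x s \<le> ?\<rho> x" unfolding rx by (rule SUP_upper) simp
    have "\<sigma> x \<noteq> \<infinity>"
    proof
      assume "\<sigma> x = \<infinity>"
      then have e: "\<sigma> x + chainH P x x s = \<infinity>" using Hnn[of x x] by (cases "chainH P x x s") auto
      have "\<infinity> \<le> ?\<rho> x" using up unfolding e .
      then show False using fin(1) by (cases "?\<rho> x") auto
    qed
    moreover have "\<sigma> x \<noteq> -\<infinity>"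
    proof
      assume mi: "\<sigma> x = -\<infinity>"
      have mz: "\<sigma> z + chainH P z x s = -\<infinity>" if "z \<le> x" for z
      proof -
        have "\<sigma> z = -\<infinity>" using mono[OF that] mi by simp
        moreover have "chainH P z x s \<noteq> \<infinity>" using Hle[OF x(2), of z] Gfin by auto
        ultimately show ?thesis using Hnn[of z x] by (cases "chainH P z x s") auto
      qed
      have "?\<rho> x \<le> -\<infinity>" unfolding rx
      proof (rule SUP_least)
        fix z assume "z \<in> {z. z \<le> x}"
        then have e: "\<sigma> z + chainH P z x s = -\<infinity>" by (intro mz) simp
        show "\<sigma> z + chainH P z x s \<le> -\<infinity>" unfolding e by simp
      qed
      then show False using fin(2) by (cases "?\<rho> x") auto
    qed
    ultimately have "ereal mK \<le> \<sigma> x" using mK x by auto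
    also have "\<sigma> x \<le> \<sigma> x + chainH P x x s" using Hnn[of x x] by (rule add_increasing2) simp
    also have "\<dots> \<le> ?\<rho> x" by (rule up)
    finally show ?thesis .
  qed
  show "y \<in> {- (R *\<^sub>R 1) .. q *\<^sub>R 1}"
  proof (rule ccontr)
    assume "y \<notin> {- (R *\<^sub>R 1) .. q *\<^sub>R 1}"
    then have "\<not> - (R *\<^sub>R 1) \<le> y" using yq by auto
    then obtain i where i: "y $ i < - R" unfolding less_eq_vec_def by (auto simp: not_le)
    have farz: "\<sigma> z + chainH P z (q *\<^sub>R 1) t \<le> ereal (mK - 1)" if "z \<le> y" for z
    proof -
      have "z $ i \<le> y $ i" using that by (simp add: less_eq_vec_def)
      then have "R < \<bar>z $ i\<bar>" using i by linarith
      also have "\<bar>z $ i\<bar> \<le> linf z" by (rule linf_ge)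
      finally have "R < linf z" .
      moreover have "z \<le> q *\<^sub>R 1" using that yq by (rule order_trans)
      ultimately show ?thesis using far by blast
    qed
    have U: "?\<rho> y \<le> ereal (mK - 1)"
    proof (cases "s = 0")
      case True
      then have "?\<rho> y = \<sigma> y" unfolding evolve_def by simp
      also have "\<sigma> y \<le> \<sigma> y + chainH P y (q *\<^sub>R 1) t" using chainH_nonneg by (rule add_increasing2) simp
      also have "\<dots> \<le> ereal (mK - 1)" by (rule farz) simp
      finally show ?thesis .
    next
      case False
      then have ry: "?\<rho> y = (SUP z \<in> {z. z \<le> y}. \<sigma> z + chainH P z y s)" unfolding evolve_def by simp
      show ?thesis unfolding ry
      proof (rule SUP_least)
        fix z assume "z \<in> {z. z \<le> y}"
        then have zy: "z \<le> y" by simp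
        have "\<sigma> z + chainH P z y s \<le> \<sigma> z + chainH P z (q *\<^sub>R 1) t"
          by (intro add_left_mono Hle yq)
        also have "\<dots> \<le> ereal (mK - 1)" by (rule farz[OF zy])
        finally show "\<sigma> z + chainH P z y s \<le> ereal (mK - 1)" .
      qed
    qed
    have "ereal mK \<le> ereal (mK - 1)" using L U unfolding eq by (rule order_trans)
    then show False by simp
  qed
qed


theorem corollary7p8:
  fixes M :: "'a measure"
    and N :: "'a \<Rightarrow> ((real^'n) \<times> real) set"
    and \<sigma> :: "real^'n \<Rightarrow> ereal"
    and q \<epsilon> t :: real
  assumes "CARD('n) \<ge> 2"
    and "poisson_pp M N"
    and "in_Sigma \<sigma>"
    and "q > 0" and "\<epsilon> > 0" and "t > 0"
  shows "\<exists>(a :: real^'n) (r :: real). r \<ge> 0 \<and>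
           (\<exists>A\<in>sets M. A \<subseteq> {\<omega>\<in>space M. \<forall>s\<in>{0..t}.
                  S_set (evolve \<sigma> (N \<omega>) s) {- (q *\<^sub>R 1) .. q *\<^sub>R 1} \<subseteq> {a .. a + r *\<^sub>R 1}}
              \<and> measure M A \<ge> 1 - \<epsilon>)"
proof -
  note pp = assms(2) and sig = assms(3) and q = assms(4) and eps = assms(5) and t = assms(6)
  obtain A c m0 where A: "A \<in> sets M" "measure M A \<ge> 1 - \<epsilon>" and m0: "m0 \<ge> 1"
    and good: "\<forall>\<omega>\<in>A. \<forall>m\<ge>m0. chainH (N \<omega>) (- ((real m ^ (CARD('n)+1)) *\<^sub>R 1)) (q *\<^sub>R 1) t \<le> ereal (real (c * m ^ CARD('n)))"
    using good_event[OF pp q t eps] by blast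
  obtain mK where mK: "\<forall>x. - (q *\<^sub>R 1) \<le> x \<and> x \<le> q *\<^sub>R 1 \<and> \<bar>\<sigma> x\<bar> \<noteq> \<infinity> \<longrightarrow> ereal mK \<le> \<sigma> x"
    using sigma_lower[OF sig q] by blast
  define d where "d = CARD('n)"
  define \<alpha> where "\<alpha> = real d / (real d + 1)"
  define C where "C = real c * 2 ^ d"
  define B where "B = C + \<bar>mK\<bar> + 1"
  obtain R0 where R0: "\<forall>z. z \<le> q *\<^sub>R 1 \<and> linf z \<ge> R0 \<longrightarrow>
           ereal (linf z powr (- real CARD('n) / (real CARD('n) + 1))) * \<sigma> z < ereal (- B)"
    using sigma_decay[OF sig, of "q *\<^sub>R 1" "- B"] by blast
  define R where "R = max (max R0 (real m0 ^ (d+1))) 1"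
  have R1: "R \<ge> 1" "R \<ge> R0" "R \<ge> real m0 ^ (d+1)" unfolding R_def by auto
  have incl: "S_set (evolve \<sigma> (N \<omega>) s) {- (q *\<^sub>R 1) .. q *\<^sub>R 1} \<subseteq> {- (R *\<^sub>R 1) .. q *\<^sub>R 1}"
    if \<omega>: "\<omega> \<in> A" and s: "s \<in> {0..t}" for \<omega> s
  proof (rule det_main[OF sig mK _ _ s])
    have g: "\<forall>m\<ge>m0. chainH (N \<omega>) (- ((real m ^ (CARD('n)+1)) *\<^sub>R 1)) (q *\<^sub>R 1) t \<le> ereal (real (c * m ^ CARD('n)))"
      using good \<omega> by blast
    show "\<forall>z. chainH (N \<omega>) z (q *\<^sub>R 1) t \<noteq> \<infinity>"
    proof
      fix z :: "real^'n"
      define m where "m = max m0 (nat \<lceil>linf z\<rceil>)"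
      have mm0: "m \<ge> m0" unfolding m_def by simp
      have m1: "real m \<ge> 1" using m0 mm0 by simp
      have "real m ^ 1 \<le> real m ^ (CARD('n)+1)" by (rule power_increasing) (use m1 in auto)
      moreover have "linf z \<le> real m" unfolding m_def by linarith
      ultimately have lz: "linf z \<le> real m ^ (CARD('n)+1)" by simp
      have zlow: "- ((real m ^ (CARD('n)+1)) *\<^sub>R 1) \<le> z"
        unfolding less_eq_vec_def
      proof
        fix i
        have "\<bar>z $ i\<bar> \<le> linf z" by (rule linf_ge)
        then show "(- ((real m ^ (CARD('n)+1)) *\<^sub>R 1)) $ i \<le> z $ i" using lz by simp
      qed
      have "chainH (N \<omega>) z (q *\<^sub>R 1) t \<le> chainH (N \<omega>) (- ((real m ^ (CARD('n)+1)) *\<^sub>R 1)) (q *\<^sub>R 1) t"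
        by (rule chainH_mono[OF zlow]) auto
      also have "\<dots> \<le> ereal (real (c * m ^ CARD('n)))" using g mm0 by blast
      finally show "chainH (N \<omega>) z (q *\<^sub>R 1) t \<noteq> \<infinity>" by auto
    qed
    show "\<forall>z. z \<le> q *\<^sub>R 1 \<and> linf z > R \<longrightarrow> \<sigma> z + chainH (N \<omega>) z (q *\<^sub>R 1) t \<le> ereal (mK - 1)"
    proof (intro allI impI, elim conjE)
      fix z :: "real^'n" assume zq: "z \<le> q *\<^sub>R 1" and zR: "linf z > R"
      define r where "r = linf z"
      have r1: "r \<ge> 1" "r \<ge> R0" "r > real m0 ^ (d+1)" using zR R1 unfolding r_def by auto
      have ex: "- real CARD('n) / (real CARD('n) + 1) = - \<alpha>" unfolding \<alpha>_def d_def by simp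
      have "ereal (r powr (- \<alpha>)) * \<sigma> z < ereal (- B)"
        using R0 zq r1(2) unfolding r_def ex by blast
      then have s1: "\<sigma> z \<le> ereal (- B * r powr \<alpha>)" by (rule ereal_powr_bound[rotated]) (use r1 in simp)
      have s2: "chainH (N \<omega>) z (q *\<^sub>R 1) t \<le> ereal (C * r powr \<alpha>)"
        using chainH_far[OF g m0, of z] r1(3) unfolding r_def C_def \<alpha>_def d_def by simp
      have "\<sigma> z + chainH (N \<omega>) z (q *\<^sub>R 1) t \<le> ereal (- B * r powr \<alpha>) + ereal (C * r powr \<alpha>)"
        by (rule add_mono[OF s1 s2])
      also have "\<dots> = ereal (- (\<bar>mK\<bar> + 1) * r powr \<alpha>)" unfolding B_def by (simp add: algebra_simps)
      also have "\<dots> \<le> ereal (mK - 1)"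
      proof -
        have "1 \<le> r powr \<alpha>" using r1(1) unfolding \<alpha>_def by (intro ge_one_powr_ge_zero) auto
        then have "(\<bar>mK\<bar> + 1) * 1 \<le> (\<bar>mK\<bar> + 1) * r powr \<alpha>"
          by (intro mult_left_mono) auto
        then have "- (\<bar>mK\<bar> + 1) * r powr \<alpha> \<le> - (\<bar>mK\<bar> + 1)"
          by (simp only: mult_minus_left mult_1_right neg_le_iff_le)
        also have "\<dots> \<le> mK - 1" by simp
        finally show ?thesis by simp
      qed
      finally show "\<sigma> z + chainH (N \<omega>) z (q *\<^sub>R 1) t \<le> ereal (mK - 1)" .
    qed
  qed
  have eqv: "- (R *\<^sub>R 1) + (R + q) *\<^sub>R 1 = (q *\<^sub>R 1 :: real^'n)" by (simp add: scaleR_add_left)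
  have sub: "A \<subseteq> {\<omega> \<in> space M. \<forall>s\<in>{0..t}. S_set (evolve \<sigma> (N \<omega>) s) {- (q *\<^sub>R 1)..q *\<^sub>R 1} \<subseteq> {- (R *\<^sub>R 1)..- (R *\<^sub>R 1) + (R + q) *\<^sub>R 1}}"
    unfolding eqv using incl sets.sets_into_space[OF A(1)] by blast
  have r0: "R + q \<ge> 0" using R1 q by simp
  have "r0' \<and> (\<exists>A'\<in>sets M. A' \<subseteq> X \<and> 1 - \<epsilon> \<le> measure M A')" if "r0'" "A \<subseteq> X" for r0' X
    using that A by blast
  from this[OF r0 sub] show ?thesis by blast
qed

end
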